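(* Let $A=(a_{nk})$ be a nonnegative regular summability matrix and let $(q_n)_{n\in\mathbb{N}}$ be a sequence with $0<q_n<1$ for all $n$, $st_A\text{-}\lim_n q_n^{\,n}=1$ and $st_A\text{-}\lim_n \frac{1}{[n]_{q_n}}=0$. Then for every continuous $f:[0,1]\to\mathbb{R}_+$, $$st_A\text{-}\lim_n\left(\sup_{x\in[0,1]}\left|B^{(M)}_{n,q_n}(f)(x)-f(x)\right|\right)=0.$$
   Context: For $q\in(0,1)$ and a nonnegative integer $m$, $[m]_q=\frac{1-q^m}{1-q}$; $[m]_q!=[m]_q[m-1]_q\cdots[1]_q$ for $m\ge1$, $[0]_q!=1$; $\left[\begin{smallmatrix} n\\ k\end{smallmatrix}\right]_q=\frac{[n]_q!}{[k]_q![n-k]_q!}$. For $x\in[0,1]$, $p_{n,k}(x;q)=\left[\begin{smallmatrix} n\\ k\end{smallmatrix}\right]_q x^k\prod_{s=0}^{n-k-1}(1-q^s x)$, and $$B^{(M)}_{n,q}(f)(x)=\frac{\bigvee_{k=0}^{n}p_{n,k}(x;q)\,f\!\left(\frac{[k]_q}{[n]_q}\right)}{\bigvee_{k=0}^{n}p_{n,k}(x;q)},$$ with $\bigvee$ the maximum. A matrix $A=(a_{nk})$ is regular if $\lim_n\sum_k a_{nk}x_k=L$ whenever $\lim_k x_k=L$. For a nonnegative regular $A$, a real sequence $(x_k)$ is $A$-statistically convergent to $L$, written $st_A\text{-}\lim x=L$, if for every $\varepsilon>0$, $\lim_n\sum_{k:|x_k-L|\ge\varepsilon}a_{nk}=0$.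 *)

theory Defs
  imports Complex_Main
begin

definition qint :: "real \<Rightarrow> nat \<Rightarrow> real" where
  "qint q m = (1 - q ^ m) / (1 - q)"

definition qfact :: "real \<Rightarrow> nat \<Rightarrow> real" where
  "qfact q m = (\<Prod>i\<in>{1..m}. qint q i)"

definition qbinom :: "real \<Rightarrow> nat \<Rightarrow> nat \<Rightarrow> real" where
  "qbinom q n k = qfact q n / (qfact q k * qfact q (n - k))"

definition pnk :: "real \<Rightarrow> nat \<Rightarrow> nat \<Rightarrow> real \<Rightarrow> real" where
  "pnk q n k x = qbinom q n k * x ^ k * (\<Prod>s<n - k. (1 - q ^ s * x))"

definition max_product_bernstein :: "real \<Rightarrow> nat \<Rightarrow> (real \<Rightarrow> real) \<Rightarrow> real \<Rightarrow> real" where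
  "max_product_bernstein q n f x =
     Max ((\<lambda>k. pnk q n k x * f (qint q k / qint q n)) ` {0..n})
     / Max ((\<lambda>k. pnk q n k x) ` {0..n})"

definition regular_matrix :: "(nat \<Rightarrow> nat \<Rightarrow> real) \<Rightarrow> bool" where
  "regular_matrix a \<longleftrightarrow>
     (\<forall>x L. x \<longlonglongrightarrow> L \<longrightarrow>
        (\<forall>n. summable (\<lambda>k. a n k * x k)) \<and> (\<lambda>n. \<Sum>k. a n k * x k) \<longlonglongrightarrow> L)"

definition nonneg_matrix :: "(nat \<Rightarrow> nat \<Rightarrow> real) \<Rightarrow> bool" where
  "nonneg_matrix a \<longleftrightarrow> (\<forall>n k. 0 \<le> a n k)"

definition stat_lim :: "(nat \<Rightarrow> nat \<Rightarrow> real) \<Rightarrow> (nat \<Rightarrow> real) \<Rightarrow> real \<Rightarrow> bool" where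
  "stat_lim a x L \<longleftrightarrow>
     (\<forall>\<epsilon>>0. (\<lambda>n. \<Sum>k. if \<bar>x k - L\<bar> \<ge> \<epsilon> then a n k else 0) \<longlonglongrightarrow> 0)"

end

theory Submission
  imports Defs "HOL-Analysis.Analysis"
begin

lemma qint_Suc: "q \<noteq> 1 \<Longrightarrow> qint q (Suc i) = qint q i + q ^ i"
  unfolding qint_def by (simp add: field_simps)

lemma qint_0[simp]: "qint q 0 = 0" by (simp add: qint_def)

lemma qint_nonneg: "0 < q \<Longrightarrow> q < 1 \<Longrightarrow> 0 \<le> qint q i"
  unfolding qint_def by (simp add: power_le_one)

lemma qint_pos: "0 < q \<Longrightarrow> q < 1 \<Longrightarrow> 0 < i \<Longrightarrow> 0 < qint q i"
  unfolding qint_def by (simp add: power_less_one_iff)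

lemma qint_mono: "0 < q \<Longrightarrow> q < 1 \<Longrightarrow> i \<le> j \<Longrightarrow> qint q i \<le> qint q j"
  unfolding qint_def by (intro divide_right_mono) (auto intro: power_decreasing)

lemma qint_split: "q \<noteq> 1 \<Longrightarrow> i \<le> n \<Longrightarrow> qint q n = qint q i + q ^ i * qint q (n - i)"
proof -
  assume "q \<noteq> 1" "i \<le> n"
  then have "q ^ n = q ^ i * q ^ (n - i)" by (simp add: power_add[symmetric])
  with \<open>q \<noteq> 1\<close> show ?thesis unfolding qint_def by (simp add: field_simps)
qed

lemma qfact_Suc: "qfact q (Suc m) = qfact q m * qint q (Suc m)"
  unfolding qfact_def by (simp add: prod.nat_ivl_Suc')

lemma qfact_0[simp]: "qfact q 0 = 1" by (simp add: qfact_def)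

lemma qfact_pos: "0 < q \<Longrightarrow> q < 1 \<Longrightarrow> 0 < qfact q m"
  by (induction m) (auto simp: qfact_Suc qint_pos)

lemma qbinom_ratio:
  assumes "0 < q" "q < 1" "i < n"
  shows "qbinom q n (Suc i) * qint q (Suc i) = qbinom q n i * qint q (n - i)"
proof -
  obtain m where m: "n - i = Suc m" "n - Suc i = m" using assms by (metis Suc_diff_Suc)
  have p: "0 < qfact q i" "0 < qfact q m" "0 < qint q (Suc i)" "0 < qint q (Suc m)"
    using assms by (auto simp: qfact_pos qint_pos)
  show ?thesis unfolding qbinom_def m qfact_Suc using p by (simp add: field_simps)
qed

lemma pnk_ratio:
  assumes "0 < q" "q < 1" "i < n"
  shows "pnk q n (Suc i) x * (qint q (Suc i) * (1 - q ^ (n - Suc i) * x))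
       = pnk q n i x * (qint q (n - i) * x)"
proof -
  obtain m where m: "n - i = Suc m" "n - Suc i = m" using assms by (metis Suc_diff_Suc)
  have "pnk q n (Suc i) x * (qint q (Suc i) * (1 - q ^ (n - Suc i) * x))
     = (qbinom q n (Suc i) * qint q (Suc i)) * x ^ Suc i * (\<Prod>s<m. (1 - q ^ s * x)) * (1 - q ^ m * x)"
    unfolding pnk_def m by (simp add: algebra_simps)
  also have "\<dots> = (qbinom q n i * qint q (n - i)) * x ^ Suc i * (\<Prod>s<Suc m. (1 - q ^ s * x))"
    using qbinom_ratio[OF assms] by (simp add: algebra_simps)
  also have "\<dots> = pnk q n i x * (qint q (n - i) * x)"
    unfolding pnk_def m by (simp add: algebra_simps)
  finally show ?thesis .
qed

lemma pnk_nonneg: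
  assumes "0 < q" "q < 1" "0 \<le> x" "x \<le> 1"
  shows "0 \<le> pnk q n k x"
proof -
  have "0 \<le> qbinom q n k" unfolding qbinom_def using assms by (simp add: qfact_pos less_imp_le)
  moreover have "0 \<le> (\<Prod>s<n - k. (1 - q ^ s * x))"
  proof (intro prod_nonneg ballI)
    fix s assume "s \<in> {..<n-k}"
    have "q ^ s \<le> 1" using assms by (simp add: power_le_one)
    then have "q ^ s * x \<le> 1" using assms by (simp add: mult_le_one)
    then show "0 \<le> 1 - q ^ s * x" by simp
  qed
  ultimately show ?thesis unfolding pnk_def using assms by simp
qed

lemma alg_U:
  fixes N I x d t :: real
  assumes "I \<le> N" "I \<ge> N * (x + d/2)" "0 \<le> x" "x \<le> 1" "0 < d" "d \<le> 1" "0 \<le> I"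
  shows "(N - I) * x \<le> (1 - d/4)^2 * (I * (1 - x))"
proof -
  have "(1 - d/4)^2 \<ge> 1 - d/2" by (simp add: power2_eq_square algebra_simps)
  have a: "I * (1 - x) \<le> N" using mult_left_le[of "1-x" I] assms by simp
  have b: "0 \<le> I * (1 - x)" using assms by simp
  have "(1 - d/4)^2 * (I * (1 - x)) \<ge> (1 - d/2) * (I * (1 - x))"
    using b \<open>(1 - d/4)^2 \<ge> 1 - d/2\<close> by (simp add: mult_right_mono)
  moreover have "(1 - d/2) * (I * (1 - x)) \<ge> I * (1 - x) - N * d / 2"
  proof -
    have "(d/2) * (I * (1 - x)) \<le> (d/2) * N" using a assms by (simp add: mult_left_mono)
    moreover have "(1 - d/2) * (I * (1 - x)) = I * (1 - x) - (d/2) * (I * (1 - x))" by (simp add: algebra_simps)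
    moreover have "(d/2) * N = N * d / 2" by simp
    ultimately show ?thesis by linarith
  qed
  moreover have "I * (1 - x) - N * d / 2 \<ge> (N - I) * x"
    using assms by (simp add: algebra_simps)
  ultimately show ?thesis by linarith
qed

lemma step_U:
  assumes q: "0 < q" "q < 1" and i: "i < n" and x: "0 \<le> x" "x \<le> 1"
    and d: "0 < d" "d \<le> 1" and th: "q ^ n \<ge> 1 - d/4"
    and v: "qint q i \<ge> qint q n * (x + d/2)"
  shows "pnk q n (Suc i) x \<le> (1 - d/4) * pnk q n i x"
proof -
  define N where "N = qint q n"
  define I where "I = qint q i"
  have Npos: "0 < N" unfolding N_def using q i by (simp add: qint_pos)
  have IN: "I \<le> N" unfolding I_def N_def using q i by (simp add: qint_mono)
  have I0: "0 \<le> I" unfolding I_def using q by (simp add: qint_nonneg)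
  have vI: "I \<ge> N * (x + d/2)" using v unfolding I_def N_def .
  have "N * (x + d/2) \<le> N" using vI IN by linarith
  then have "x + d/2 \<le> 1" using Npos by simp
  then have x1: "x < 1" using d by simp
  have qi: "q ^ i \<ge> 1 - d/4" using th power_decreasing[of i n q] q i by linarith
  have qi0: "0 < q ^ i" using q by simp
  have split: "qint q (n - i) * q ^ i = N - I"
    unfolding N_def I_def using qint_split[of q i n] q i by (simp add: algebra_simps)
  have qs: "q ^ (n - Suc i) \<le> 1" using q by (simp add: power_le_one)
  have D1: "1 - q ^ (n - Suc i) * x \<ge> 1 - x" using qs x mult_right_mono[OF qs, of x] by simp
  have ISuc: "qint q (Suc i) \<ge> I" unfolding I_def using q by (simp add: qint_mono)
  define D where "D = qint q (Suc i) * (1 - q ^ (n - Suc i) * x)"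
  have Dge: "D \<ge> I * (1 - x)" unfolding D_def using D1 ISuc I0 x1
    by (meson diff_ge_0_iff_ge less_imp_le mult_mono order_trans)
  have Dpos: "0 < D" unfolding D_def using q x1 D1
    by (intro mult_pos_pos) (auto simp: qint_pos)
  have key: "(N - I) * x \<le> (1 - d/4)^2 * (I * (1 - x))"
    using alg_U[OF IN vI x d I0] .
  have "qint q (n - i) * x * q ^ i = (N - I) * x" unfolding split[symmetric] by (simp only: ac_simps)
  also have "\<dots> \<le> (1 - d/4)^2 * (I * (1 - x))" by (rule key)
  also have "\<dots> \<le> ((1 - d/4) * (I * (1 - x))) * q ^ i"
  proof -
    have Y: "0 \<le> (1 - d/4) * (I * (1 - x))" using d I0 x1 by simp
    have "(1 - d/4)^2 * (I * (1 - x)) = ((1 - d/4) * (I * (1 - x))) * (1 - d/4)"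
      by (simp add: power2_eq_square)
    also have "\<dots> \<le> ((1 - d/4) * (I * (1 - x))) * q ^ i" using mult_left_mono[OF qi Y] .
    finally show ?thesis .
  qed
  finally have "qint q (n - i) * x \<le> (1 - d/4) * (I * (1 - x))" using qi0 by simp
  also have "\<dots> \<le> (1 - d/4) * D" using Dge d by (simp add: mult_left_mono)
  finally have c: "qint q (n - i) * x \<le> (1 - d/4) * D" .
  have "pnk q n (Suc i) x * D = pnk q n i x * (qint q (n - i) * x)"
    unfolding D_def using pnk_ratio[OF q i] .
  also have "\<dots> \<le> pnk q n i x * ((1 - d/4) * D)"
    using c pnk_nonneg[OF q x] by (simp add: mult_left_mono)
  also have "\<dots> = ((1 - d/4) * pnk q n i x) * D" by (simp add: algebra_simps)
  finally show ?thesis by (simp only: mult_le_cancel_right_pos[OF Dpos])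
qed

lemma alg_L:
  fixes N J x d t :: real
  assumes "J \<le> N" "J \<le> N * (x - d/2)" "0 \<le> x" "x \<le> 1" "0 < d" "d \<le> 1" "0 \<le> J"
    "t \<ge> 1 - d/4" "t \<le> 1"
  shows "J * (1 - t * x) \<le> (1 - d/4) * ((N - J) * x)"
proof -
  have e1: "J * (1 - t * x) = J * (1 - x) + J * ((1 - t) * x)" by (simp add: algebra_simps)
  have "(1 - t) * x \<le> d/4" using assms mult_mono[of "1-t" "d/4" x 1] by simp
  then have e2: "J * ((1 - t) * x) \<le> N * d / 4"
    using assms mult_mono[of J N "(1 - t) * x" "d/4"] by simp
  have e3: "J * (1 - x) = (N - J) * x - (N * x - J)" by (simp add: algebra_simps)
  have e4: "N * x - J \<ge> N * d / 2" using assms by (simp add: algebra_simps)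
  have "(N - J) * x \<le> N" using assms mult_mono[of "N - J" N x 1] by simp
  then have e5: "(d/4) * ((N - J) * x) \<le> N * d / 4" using assms mult_left_mono[of "(N - J) * x" N "d/4"] by (simp add: algebra_simps)
  have e6: "(1 - d/4) * ((N - J) * x) = (N - J) * x - (d/4) * ((N - J) * x)" by (simp add: algebra_simps)
  show ?thesis using e1 e2 e3 e4 e5 e6 by linarith
qed

lemma step_L:
  assumes q: "0 < q" "q < 1" and i: "i < n" and x: "0 \<le> x" "x \<le> 1"
    and d: "0 < d" "d \<le> 1" and th: "q ^ n \<ge> 1 - d/4"
    and v: "qint q (Suc i) \<le> qint q n * (x - d/2)"
  shows "pnk q n i x \<le> (1 - d/4) * pnk q n (Suc i) x"
proof -
  define N where "N = qint q n"
  define J where "J = qint q (Suc i)"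
  have Npos: "0 < N" unfolding N_def using q i by (simp add: qint_pos)
  have JN: "J \<le> N" unfolding J_def N_def using q i by (simp add: qint_mono)
  have J0: "0 < J" unfolding J_def using q by (simp add: qint_pos)
  have vJ: "J \<le> N * (x - d/2)" using v unfolding J_def N_def .
  have "0 < N * (x - d/2)" using vJ J0 by linarith
  then have "x - d/2 > 0" using Npos by (simp add: zero_less_mult_iff)
  then have x0: "0 < x" using d by simp
  have qs: "q ^ (n - Suc i) \<ge> 1 - d/4" using th power_decreasing[of "n - Suc i" n q] q by linarith
  have qs1: "q ^ (n - Suc i) \<le> 1" using q by (simp add: power_le_one)
  have "qint q 1 = 1" using q by (simp add: qint_def)
  then have ni1: "qint q (n - i) \<ge> 1" using qint_mono[OF q, of 1 "n - i"] i by simp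
  have qi1: "q ^ i \<le> 1" using q by (simp add: power_le_one)
  have "N = qint q i + q ^ i * qint q (n - i)"
    unfolding N_def using qint_split[of q i n] q i by simp
  moreover have "J = qint q i + q ^ i" unfolding J_def using q by (simp add: qint_Suc)
  ultimately have "N - J = q ^ i * (qint q (n - i) - 1)" by (simp add: algebra_simps)
  also have "\<dots> \<le> qint q (n - i) - 1" using qi1 ni1 mult_right_mono[OF qi1, of "qint q (n - i) - 1"] by simp
  finally have NJ: "N - J \<le> qint q (n - i)" by simp
  have key: "J * (1 - q ^ (n - Suc i) * x) \<le> (1 - d/4) * ((N - J) * x)"
    using alg_L[OF JN vJ x d less_imp_le[OF J0] qs qs1] .
  also have "\<dots> \<le> (1 - d/4) * (qint q (n - i) * x)"
    using NJ x d by (intro mult_left_mono mult_right_mono) auto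
  finally have c: "J * (1 - q ^ (n - Suc i) * x) \<le> (1 - d/4) * (qint q (n - i) * x)" .
  define E where "E = qint q (n - i) * x"
  have Epos: "0 < E" unfolding E_def using ni1 x0 by simp
  have "pnk q n i x * E = pnk q n (Suc i) x * (J * (1 - q ^ (n - Suc i) * x))"
    unfolding E_def J_def using pnk_ratio[OF q i] by simp
  also have "\<dots> \<le> pnk q n (Suc i) x * ((1 - d/4) * E)"
    using c pnk_nonneg[OF q x] unfolding E_def by (simp add: mult_left_mono)
  also have "\<dots> = ((1 - d/4) * pnk q n (Suc i) x) * E" by (simp add: algebra_simps)
  finally show ?thesis by (simp only: mult_le_cancel_right_pos[OF Epos])
qed

lemma decay_up:
  fixes g v :: "nat \<Rightarrow> real"
  assumes st: "\<And>i. i < n \<Longrightarrow> v i \<ge> a \<Longrightarrow> g (Suc i) \<le> r * g i"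
    and inc: "\<And>i. i < n \<Longrightarrow> v (Suc i) \<le> v i + h"
    and v0: "v 0 < a" and h: "0 \<le> h" and r: "0 \<le> r" and M: "\<And>k. k \<le> n \<Longrightarrow> g k \<le> M"
  shows "k \<le> n \<Longrightarrow> v k \<ge> a + real t * h \<Longrightarrow> g k \<le> r ^ t * M"
proof (induction t arbitrary: k)
  case 0 then show ?case using M by simp
next
  case (Suc t)
  have "v k \<ge> a" using Suc.prems h by (smt (verit) of_nat_0_le_iff mult_nonneg_nonneg)
  then obtain j where j: "k = Suc j" using v0 by (cases k) auto
  have jn: "j < n" using Suc.prems j by simp
  have "v j \<ge> a + real t * h" using inc[OF jn] Suc.prems j by (simp add: algebra_simps)
  then have IH: "g j \<le> r ^ t * M" using Suc.IH jn by simp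
  have "v j \<ge> a" using \<open>v j \<ge> a + real t * h\<close> h by (smt (verit) of_nat_0_le_iff mult_nonneg_nonneg)
  then have "g k \<le> r * g j" using st[OF jn] j by simp
  also have "\<dots> \<le> r * (r ^ t * M)" using IH r by (rule mult_left_mono)
  finally show ?case by simp
qed

lemma decay_down:
  fixes g v :: "nat \<Rightarrow> real"
  assumes st: "\<And>i. i < n \<Longrightarrow> v (Suc i) \<le> b \<Longrightarrow> g i \<le> r * g (Suc i)"
    and inc: "\<And>i. i < n \<Longrightarrow> v (Suc i) \<le> v i + h"
    and vn: "b < v n" and h: "0 \<le> h" and r: "0 \<le> r" and M: "\<And>k. k \<le> n \<Longrightarrow> g k \<le> M"
  shows "k \<le> n \<Longrightarrow> v k \<le> b - real t * h \<Longrightarrow> g k \<le> r ^ t * M"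
proof (induction t arbitrary: k)
  case 0 then show ?case using M by simp
next
  case (Suc t)
  have "v k \<le> b" using Suc.prems h by (smt (verit) of_nat_0_le_iff mult_nonneg_nonneg)
  then have "k \<noteq> n" using vn by auto
  then have kn: "k < n" using Suc.prems by simp
  have "v (Suc k) \<le> b - real t * h" using inc[OF kn] Suc.prems by (simp add: algebra_simps)
  then have IH: "g (Suc k) \<le> r ^ t * M" using Suc.IH kn by simp
  have "v (Suc k) \<le> b" using \<open>v (Suc k) \<le> b - real t * h\<close> h by (smt (verit) of_nat_0_le_iff mult_nonneg_nonneg)
  then have "g k \<le> r * g (Suc k)" using st[OF kn] by simp
  also have "\<dots> \<le> r * (r ^ t * M)" using IH r by (rule mult_left_mono)
  finally show ?case by simp
qed

lemma maxprod:
  fixes p y :: "nat \<Rightarrow> real"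
  assumes S: "finite S" "S \<noteq> {}" and p: "\<And>k. k \<in> S \<Longrightarrow> 0 \<le> p k" and c: "0 \<le> c"
    and P: "P = Max (p ` S)" "0 < P"
    and b: "\<And>k. k \<in> S \<Longrightarrow> p k * \<bar>y k - c\<bar> \<le> P * e"
  shows "\<bar>Max ((\<lambda>k. p k * y k) ` S) / P - c\<bar> \<le> e"
proof -
  define Mx where "Mx = Max ((\<lambda>k. p k * y k) ` S)"
  have up: "Mx \<le> P * c + P * e"
    unfolding Mx_def
  proof (subst Max_le_iff, (use S in auto)[2], safe)
    fix k assume k: "k \<in> S"
    have "p k \<le> P" unfolding P using S k by simp
    then have "p k * c \<le> P * c" using c by (simp add: mult_right_mono)
    moreover have "p k * y k \<le> p k * c + p k * \<bar>y k - c\<bar>"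
      using p[OF k] by (simp add: ring_distribs[symmetric] mult_left_mono del: ring_distribs) 
    ultimately show "p k * y k \<le> P * c + P * e" using b[OF k] by linarith
  qed
  have "Max (p ` S) \<in> p ` S" using S by (intro Max_in) auto
  then obtain k0 where k0: "k0 \<in> S" "p k0 = P" using P(1) by auto
  have "Mx \<ge> p k0 * y k0" unfolding Mx_def using S k0 by (intro Max_ge) auto
  moreover have "p k0 * y k0 \<ge> p k0 * c - p k0 * \<bar>y k0 - c\<bar>"
    using p[OF k0(1)] by (simp add: right_diff_distrib[symmetric] mult_left_mono del: right_diff_distrib)
  ultimately have lo: "Mx \<ge> P * c - P * e" using b[OF k0(1)] unfolding k0(2) by linarith
  have "\<bar>Mx - P * c\<bar> \<le> P * e" using up lo by linarith
  moreover have "Mx / P - c = (Mx - P * c) / P" using P by (simp add: field_simps)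
  ultimately have "\<bar>Mx / P - c\<bar> \<le> e" using P by (simp add: pos_divide_le_eq mult.commute)
  then show ?thesis unfolding Mx_def .
qed

lemma qbinom_n0: "0 < q \<Longrightarrow> q < 1 \<Longrightarrow> qbinom q n 0 = 1"
  unfolding qbinom_def using qfact_pos[of q n] by simp

lemma qbinom_nn: "0 < q \<Longrightarrow> q < 1 \<Longrightarrow> qbinom q n n = 1"
  unfolding qbinom_def using qfact_pos[of q n] by simp

lemma pmax_pos:
  assumes q: "0 < q" "q < 1" and x: "0 \<le> x" "x \<le> 1"
  shows "0 < Max ((\<lambda>k. pnk q n k x) ` {0..n})"
proof (cases "x < 1")
  case True
  have "0 < (\<Prod>s<n. (1 - q ^ s * x))"
  proof (intro prod_pos ballI)
    fix s assume "s \<in> {..<n}"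
    have "q ^ s \<le> 1" using q by (simp add: power_le_one)
    then have "q ^ s * x \<le> x" using x mult_right_mono[of "q^s" 1 x] by simp
    then show "0 < 1 - q ^ s * x" using True by simp
  qed
  then have "0 < pnk q n 0 x" unfolding pnk_def using qbinom_n0[OF q] by simp
  also have "\<dots> \<le> Max ((\<lambda>k. pnk q n k x) ` {0..n})" by (intro Max_ge) auto
  finally show ?thesis .
next
  case False
  then have "x = 1" using x by simp
  then have "0 < pnk q n n x" unfolding pnk_def using qbinom_nn[OF q] by simp
  also have "\<dots> \<le> Max ((\<lambda>k. pnk q n k x) ` {0..n})" by (intro Max_ge) auto
  finally show ?thesis .
qed

lemma det:
  fixes f :: "real \<Rightarrow> real"
  assumes f: "continuous_on {0..1} f" and fpos: "\<And>x. x \<in> {0..1} \<Longrightarrow> 0 \<le> f x" and e: "0 < e"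
  shows "\<exists>\<eta>>0. \<forall>n qq. 0 < qq \<and> qq < 1 \<and> 0 < n \<and> qq ^ n \<ge> 1 - \<eta> \<and> 1 / qint qq n \<le> \<eta> \<longrightarrow>
           (\<forall>x\<in>{0..1}. \<bar>max_product_bernstein qq n f x - f x\<bar> \<le> e)"
proof -
  obtain B where B: "B \<ge> 0" "\<And>x. x \<in> {0..1} \<Longrightarrow> norm (f x) \<le> B"
    using continuous_on_compact_bound[OF compact_Icc f] by blast
  define B1 where "B1 = B + 1"
  have B1: "0 < B1" "B \<le> B1" unfolding B1_def using B by auto
  have "uniformly_continuous_on {0..1} f" using compact_uniformly_continuous[OF f compact_Icc] .
  then obtain d0 where d0: "d0 > 0"
    "\<And>x x'. x \<in> {0..1} \<Longrightarrow> x' \<in> {0..1} \<Longrightarrow> dist x' x < d0 \<Longrightarrow> dist (f x') (f x) < e"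
    unfolding uniformly_continuous_on_def using e by metis
  define d where "d = min d0 1"
  have d: "0 < d" "d \<le> 1" "d \<le> d0" unfolding d_def using d0 by auto
  define r where "r = 1 - d/4"
  have r: "0 \<le> r" "r < 1" unfolding r_def using d by auto
  have "\<forall>\<^sub>F n in sequentially. \<bar>r ^ n\<bar> < e / B1"
    by (rule Archimedean_eventually_pow_inverse) (use r e B1 in auto)
  then obtain T where T: "\<bar>r ^ T\<bar> < e / B1" unfolding eventually_sequentially by blast
  have rT: "r ^ T * B1 < e" using T B1 r by (simp add: pos_less_divide_eq)
  define eta where "eta = min (d/4) (d / (2 * (real T + 1)))"
  have eta1: "0 < eta" unfolding eta_def using d by simp
  have eta2: "eta \<le> d/4" unfolding eta_def by (rule min.cobounded1)
  have eta3: "eta \<le> d / (2 * (real T + 1))" unfolding eta_def by (rule min.cobounded2)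
  note eta = eta1 eta2 eta3
  show ?thesis
  proof (intro exI[of _ eta] conjI allI impI ballI eta(1))
    fix n :: nat and qq x :: real
    assume H: "0 < qq \<and> qq < 1 \<and> 0 < n \<and> qq ^ n \<ge> 1 - eta \<and> 1 / qint qq n \<le> eta"
    assume x: "x \<in> {0..1}"
    have q: "0 < qq" "qq < 1" and n: "0 < n" using H by auto
    have th: "qq ^ n \<ge> 1 - d/4" using H eta by linarith
    define N where "N = qint qq n"
    have Npos: "0 < N" unfolding N_def using q n by (simp add: qint_pos)
    have hN: "1 / N \<le> eta" using H unfolding N_def by simp
    have Th: "real T * (1 / N) \<le> d / 2"
    proof -
      have "real T * (1 / N) \<le> real T * (d / (2 * (real T + 1)))"
        using hN eta by (intro mult_left_mono) auto
      also have "\<dots> \<le> d / 2" using d by (simp add: field_simps)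
      finally show ?thesis .
    qed
    have x01: "0 \<le> x" "x \<le> 1" using x by auto
    define P where "P = Max ((\<lambda>k. pnk qq n k x) ` {0..n})"
    have Ppos: "0 < P" unfolding P_def using pmax_pos[OF q x01] .
    have pleP: "\<And>k. k \<le> n \<Longrightarrow> pnk qq n k x \<le> P" unfolding P_def by (intro Max_ge) auto
    define v where "v i = qint qq i / N" for i
    have inc: "\<And>i. i < n \<Longrightarrow> v (Suc i) \<le> v i + 1 / N"
    proof -
      fix i
      have "qq ^ i \<le> 1" using q by (simp add: power_le_one)
      then show "v (Suc i) \<le> v i + 1 / N" unfolding v_def using q Npos
        by (simp add: qint_Suc add_divide_distrib divide_right_mono)
    qed
    have v01: "\<And>k. k \<le> n \<Longrightarrow> 0 \<le> v k \<and> v k \<le> 1"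
      unfolding v_def N_def using q Npos unfolding N_def
      by (auto simp: qint_nonneg qint_mono divide_le_eq_1)
    have vn: "v n = 1" unfolding v_def N_def using Npos N_def by simp
    have bnd: "pnk qq n k x * \<bar>f (v k) - f x\<bar> \<le> P * e" if k: "k \<in> {0..n}" for k
    proof -
      have kn: "k \<le> n" using k by simp
      have pk0: "0 \<le> pnk qq n k x" using pnk_nonneg[OF q x01] .
      have vk: "v k \<in> {0..1}" using v01[OF kn] by simp
      have fdiff: "\<bar>f (v k) - f x\<bar> \<le> B"
        using B(2)[OF vk] B(2)[OF x] fpos[OF vk] fpos[OF x] by simp
      have far: "\<bar>f (v k) - f x\<bar> * (r ^ T * P) \<le> P * e" if "pnk qq n k x \<le> r ^ T * P"
      proof -
        have "\<bar>f (v k) - f x\<bar> * (r ^ T * P) \<le> B1 * (r ^ T * P)"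
          using fdiff B1 r Ppos by (intro mult_right_mono) auto
        also have "\<dots> = (r ^ T * B1) * P" by simp
        also have "\<dots> \<le> e * P" using rT Ppos by (intro mult_right_mono) auto
        finally show ?thesis by (simp only: mult.commute)
      qed
      consider "\<bar>v k - x\<bar> < d" | "v k \<ge> x + d" | "v k \<le> x - d" by linarith
      then show ?thesis
      proof cases
        case 1
        then have "\<bar>f (v k) - f x\<bar> < e" using d0(2)[OF x vk] d by (simp add: dist_real_def)
        then show ?thesis using pk0 pleP[OF kn] e by (intro mult_mono) auto
      next
        case 2
        have "pnk qq n k x \<le> r ^ T * P"
        proof (rule decay_up[where v=v and a="x + d/2" and h="1/N"])
          fix i assume i: "i < n" "x + d/2 \<le> v i"
          then have "qint qq i \<ge> qint qq n * (x + d/2)"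
            unfolding v_def N_def using Npos N_def by (simp add: pos_le_divide_eq mult.commute)
          then show "pnk qq n (Suc i) x \<le> r * pnk qq n i x"
            unfolding r_def using step_U[OF q i(1) x01 d(1,2) th] by simp
        next
          show "v (Suc i) \<le> v i + 1 / N" if "i < n" for i using inc that .
          show "v 0 < x + d/2" unfolding v_def using d x01 by simp
          show "0 \<le> 1 / N" using Npos by simp
          show "0 \<le> r" using r by simp
          show "pnk qq n j x \<le> P" if "j \<le> n" for j using pleP that .
          show "k \<le> n" using kn .
          show "x + d / 2 + real T * (1 / N) \<le> v k" using 2 Th by linarith
        qed
        then show ?thesis using far pk0 fdiff
          by (smt (verit) abs_ge_zero mult_right_mono mult.commute)
      next
        case 3
        have "pnk qq n k x \<le> r ^ T * P"
        proof (rule decay_down[where v=v and b="x - d/2" and h="1/N"])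
          fix i assume i: "i < n" "v (Suc i) \<le> x - d/2"
          then have "qint qq (Suc i) \<le> qint qq n * (x - d/2)"
            unfolding v_def N_def using Npos N_def by (simp add: pos_divide_le_eq mult.commute)
          then show "pnk qq n i x \<le> r * pnk qq n (Suc i) x"
            unfolding r_def using step_L[OF q i(1) x01 d(1,2) th] by simp
        next
          show "v (Suc i) \<le> v i + 1 / N" if "i < n" for i using inc that .
          show "x - d/2 < v n" using vn d x01 by simp
          show "0 \<le> 1 / N" using Npos by simp
          show "0 \<le> r" using r by simp
          show "pnk qq n j x \<le> P" if "j \<le> n" for j using pleP that .
          show "k \<le> n" using kn .
          show "v k \<le> x - d / 2 - real T * (1 / N)" using 3 Th by linarith
        qed
        then show ?thesis using far pk0 fdiff
          by (smt (verit) abs_ge_zero mult_right_mono mult.commute)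
      qed
    qed
    have "\<bar>Max ((\<lambda>k. pnk qq n k x * f (v k)) ` {0..n}) / P - f x\<bar> \<le> e"
      by (rule maxprod[OF _ _ _ fpos[OF x] P_def Ppos bnd]) (auto intro: pnk_nonneg[OF q x01])
    then show "\<bar>max_product_bernstein qq n f x - f x\<bar> \<le> e"
      unfolding max_product_bernstein_def P_def v_def N_def .
  qed
qed

definition nullset :: "(nat \<Rightarrow> nat \<Rightarrow> real) \<Rightarrow> (nat \<Rightarrow> bool) \<Rightarrow> bool" where
  "nullset a P \<longleftrightarrow> (\<lambda>n. \<Sum>k. if P k then a n k else 0) \<longlonglongrightarrow> 0"

lemma summable_row:
  assumes "regular_matrix a" shows "summable (\<lambda>k. a n k)"
proof -
  have "(\<lambda>k. 1::real) \<longlonglongrightarrow> 1" by simp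
  then have "summable (\<lambda>k. a n k * 1)" using assms unfolding regular_matrix_def by blast
  then show ?thesis by simp
qed

lemma summable_ind:
  assumes "regular_matrix a" "nonneg_matrix a" shows "summable (\<lambda>k. if P k then a n k else 0)"
  by (rule summable_comparison_test[OF _ summable_row[OF assms(1)]])
     (use assms(2) in \<open>auto simp: nonneg_matrix_def\<close>)

lemma null_mono:
  assumes "regular_matrix a" "nonneg_matrix a" "\<And>k. P k \<Longrightarrow> Q k" "nullset a Q"
  shows "nullset a P"
  unfolding nullset_def
proof (rule tendsto_sandwich[OF _ _ tendsto_const assms(4)[unfolded nullset_def]])
  show "\<forall>\<^sub>F n in sequentially. 0 \<le> (\<Sum>k. if P k then a n k else 0)"
    using assms(2) by (intro always_eventually allI suminf_nonneg summable_ind[OF assms(1,2)])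
      (auto simp: nonneg_matrix_def)
  show "\<forall>\<^sub>F n in sequentially. (\<Sum>k. if P k then a n k else 0) \<le> (\<Sum>k. if Q k then a n k else 0)"
    using assms by (intro always_eventually allI suminf_le summable_ind[OF assms(1,2)])
      (auto simp: nonneg_matrix_def)
qed

lemma null_disj:
  assumes "regular_matrix a" "nonneg_matrix a" "nullset a P" "nullset a Q"
  shows "nullset a (\<lambda>k. P k \<or> Q k)"
  unfolding nullset_def
proof (rule tendsto_sandwich[OF _ _ tendsto_const])
  show "\<forall>\<^sub>F n in sequentially. 0 \<le> (\<Sum>k. if P k \<or> Q k then a n k else 0)"
    using assms(2) by (intro always_eventually allI suminf_nonneg summable_ind[OF assms(1,2)])
      (auto simp: nonneg_matrix_def)
  show "\<forall>\<^sub>F n in sequentially. (\<Sum>k. if P k \<or> Q k then a n k else 0) \<le>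
      (\<Sum>k. if P k then a n k else 0) + (\<Sum>k. if Q k then a n k else 0)"
  proof (intro always_eventually allI)
    fix n
    have "(\<Sum>k. if P k then a n k else 0) + (\<Sum>k. if Q k then a n k else 0)
        = (\<Sum>k. (if P k then a n k else 0) + (if Q k then a n k else 0))"
      by (rule suminf_add[OF summable_ind[OF assms(1,2)] summable_ind[OF assms(1,2)]])
    moreover have "(\<Sum>k. if P k \<or> Q k then a n k else 0) \<le> \<dots>"
      using assms(2) by (intro suminf_le summable_add summable_ind[OF assms(1,2)])
        (auto simp: nonneg_matrix_def)
    ultimately show "(\<Sum>k. if P k \<or> Q k then a n k else 0) \<le>
      (\<Sum>k. if P k then a n k else 0) + (\<Sum>k. if Q k then a n k else 0)" by simp
  qed
  show "(\<lambda>n. (\<Sum>k. if P k then a n k else 0) + (\<Sum>k. if Q k then a n k else 0)) \<longlonglongrightarrow> 0"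
    using tendsto_add[OF assms(3,4)[unfolded nullset_def]] by simp
qed

lemma null_zero:
  assumes "regular_matrix a"
  shows "nullset a (\<lambda>k. k = 0)"
proof -
  have "(\<lambda>k. if k = 0 then 1 else 0::real) \<longlonglongrightarrow> 0"
    by (rule tendsto_eventually) (auto simp: eventually_sequentially intro: exI[of _ 1])
  then have "(\<lambda>n. \<Sum>k. a n k * (if k = 0 then 1 else 0)) \<longlonglongrightarrow> 0"
    using assms unfolding regular_matrix_def by blast
  moreover have "(\<lambda>k. a n k * (if k = 0 then 1 else 0)) = (\<lambda>k. if k = 0 then a n k else 0)" for n
    by auto
  ultimately show ?thesis unfolding nullset_def by simp
qed

theorem theorem8:
  fixes a :: "nat \<Rightarrow> nat \<Rightarrow> real" and q :: "nat \<Rightarrow> real" and f :: "real \<Rightarrow> real"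
  assumes "nonneg_matrix a" and "regular_matrix a"
    and "\<And>n. 0 < q n \<and> q n < 1"
    and "stat_lim a (\<lambda>n. q n ^ n) 1"
    and "stat_lim a (\<lambda>n. 1 / qint (q n) n) 0"
    and "continuous_on {0..1} f" and "\<And>x. x \<in> {0..1} \<Longrightarrow> 0 \<le> f x"
  shows "stat_lim a
           (\<lambda>n. SUP x\<in>{0..1}. \<bar>max_product_bernstein (q n) n f x - f x\<bar>) 0"
  unfolding stat_lim_def
proof (intro allI impI)
  fix \<epsilon> :: real assume e: "\<epsilon> > 0"
  obtain \<eta> where eta: "\<eta> > 0" and
    H: "\<And>n qq. 0 < qq \<and> qq < 1 \<and> 0 < n \<and> qq ^ n \<ge> 1 - \<eta> \<and> 1 / qint qq n \<le> \<eta> \<Longrightarrow>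
           (\<forall>x\<in>{0..1}. \<bar>max_product_bernstein qq n f x - f x\<bar> \<le> \<epsilon>/2)"
    using det[OF assms(6,7), of "\<epsilon>/2"] e by auto
  define S where "S n = (SUP x\<in>{0..1}. \<bar>max_product_bernstein (q n) n f x - f x\<bar>)" for n
  have n1: "nullset a (\<lambda>k. \<bar>q k ^ k - 1\<bar> \<ge> \<eta>)"
    using assms(4) eta unfolding stat_lim_def nullset_def by blast
  have n2: "nullset a (\<lambda>k. \<bar>1 / qint (q k) k - 0\<bar> \<ge> \<eta>)"
    using assms(5) eta unfolding stat_lim_def nullset_def by blast
  have nall: "nullset a (\<lambda>k. k = 0 \<or> (\<bar>q k ^ k - 1\<bar> \<ge> \<eta> \<or> \<bar>1 / qint (q k) k - 0\<bar> \<ge> \<eta>))"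
    by (intro null_disj null_zero assms(1,2) n1 n2)
  have imp: "k = 0 \<or> (\<bar>q k ^ k - 1\<bar> \<ge> \<eta> \<or> \<bar>1 / qint (q k) k - 0\<bar> \<ge> \<eta>)"
    if bad: "\<bar>S k - 0\<bar> \<ge> \<epsilon>" for k
  proof (rule ccontr)
    assume "\<not> ?thesis"
    then have c: "k \<noteq> 0 \<and> \<not> \<eta> \<le> \<bar>q k ^ k - 1\<bar> \<and> \<not> \<eta> \<le> \<bar>1 / qint (q k) k - 0\<bar>" by (simp only: de_Morgan_disj, simp)
    have k: "0 < k" "q k ^ k \<ge> 1 - \<eta>" "1 / qint (q k) k \<le> \<eta>"
      using c abs_ge_self[of "1 / qint (q k) k - 0"] abs_ge_minus_self[of "q k ^ k - 1"] by auto
    have all: "\<forall>x\<in>{0..1}. \<bar>max_product_bernstein (q k) k f x - f x\<bar> \<le> \<epsilon>/2"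
      using H[of "q k" k] k assms(3)[of k] by blast
    have "S k \<le> \<epsilon>/2" unfolding S_def using all by (intro cSUP_least) auto
    moreover have "0 \<le> S k" unfolding S_def
    proof (rule cSUP_upper2[of _ _ 0])
      show "bdd_above ((\<lambda>x. \<bar>max_product_bernstein (q k) k f x - f x\<bar>) ` {0..1})"
        using all by (intro bdd_aboveI2[of _ _ "\<epsilon>/2"]) auto
    qed auto
    ultimately show False using bad e by linarith
  qed
  have "nullset a (\<lambda>k. \<bar>S k - 0\<bar> \<ge> \<epsilon>)"
    by (rule null_mono[OF assms(2,1) _ nall]) (use imp in blast)
  then show "(\<lambda>n. \<Sum>k. if \<epsilon> \<le> \<bar>(SUP x\<in>{0..1}. \<bar>max_product_bernstein (q k) k f x - f x\<bar>) - 0\<bar> then a n k else 0) \<longlonglongrightarrow> 0"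
    unfolding nullset_def S_def .
qed

end
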